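(* Let $K$ be a field and $\nu$ a valuation on $K[x]$. For all nonconstant $f,g\in K[x]$ we have $\epsilon(fg)=\max\{\epsilon(f),\epsilon(g)\}$.
   Context: $\nu:K[x]\to\Gamma\cup\{\infty\}$ is a valuation ($\Gamma$ an ordered abelian group) with $\nu(f)=\infty$ only for $f=0$; $\Gamma'=\Gamma\otimes\mathbb{Q}$ is the divisible hull. For $k\in\mathbb{N}$, $\partial_kf=\frac{1}{k!}\frac{d^kf}{dx^k}$ is the Hasse derivative. For nonconstant $f$, $\epsilon(f)=\max\{(\nu(f)-\nu(\partial_kf))/k\mid 1\le k\le\deg f,\ \partial_kf\neq0\}\in\Gamma'$. *)

theory Defs
  imports "HOL-Computational_Algebra.Polynomial"
begin

definition hasse :: "nat \<Rightarrow> 'a::comm_ring_1 poly \<Rightarrow> 'a poly" where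
  "hasse k f = (\<Sum>i\<le>degree f. monom (of_nat (i choose k) * coeff f i) (i - k))"

text \<open>Valuation on K[x] with values in an ordered abelian group; the value infinity is
  taken by 0 only, so we record the valuation on nonzero polynomials (value at 0 irrelevant).\<close>
definition is_valuation :: "('a::field poly \<Rightarrow> 'g::linordered_ab_group_add) \<Rightarrow> bool" where
  "is_valuation \<nu> \<longleftrightarrow>
     (\<forall>f g. f \<noteq> 0 \<longrightarrow> g \<noteq> 0 \<longrightarrow> \<nu> (f * g) = \<nu> f + \<nu> g) \<and>
     (\<forall>f g. f \<noteq> 0 \<longrightarrow> g \<noteq> 0 \<longrightarrow> f + g \<noteq> 0 \<longrightarrow> min (\<nu> f) (\<nu> g) \<le> \<nu> (f + g))"

text \<open>Elements of the divisible hull \<Gamma> \<otimes> Q are represented by pairs (a, m), m > 0,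
  standing for a/m.  n-fold multiple in an abelian group:\<close>
definition nsmul :: "nat \<Rightarrow> 'g::ab_group_add \<Rightarrow> 'g" where
  "nsmul n a = (\<Sum>_<n. a)"

definition dh_le :: "'g::linordered_ab_group_add \<times> nat \<Rightarrow> 'g \<times> nat \<Rightarrow> bool" where
  "dh_le p q \<longleftrightarrow> nsmul (snd q) (fst p) \<le> nsmul (snd p) (fst q)"

definition dh_eq :: "'g::linordered_ab_group_add \<times> nat \<Rightarrow> 'g \<times> nat \<Rightarrow> bool" where
  "dh_eq p q \<longleftrightarrow> dh_le p q \<and> dh_le q p"

definition dh_max :: "'g::linordered_ab_group_add \<times> nat \<Rightarrow> 'g \<times> nat \<Rightarrow> 'g \<times> nat" where
  "dh_max p q = (if dh_le p q then q else p)"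

definition eps_set :: "('a::field poly \<Rightarrow> 'g::linordered_ab_group_add) \<Rightarrow> 'a poly \<Rightarrow> ('g \<times> nat) set" where
  "eps_set \<nu> f = {(\<nu> f - \<nu> (hasse k f), k) | k. 1 \<le> k \<and> k \<le> degree f \<and> hasse k f \<noteq> 0}"

definition epsilon :: "('a::field poly \<Rightarrow> 'g::linordered_ab_group_add) \<Rightarrow> 'a poly \<Rightarrow> 'g \<times> nat" where
  "epsilon \<nu> f = (SOME p. p \<in> eps_set \<nu> f \<and> (\<forall>q \<in> eps_set \<nu> f. dh_le q p))"

end

theory Submission
  imports Defs
begin


lemma coeff_hasse: "coeff (hasse k f) n = of_nat ((n+k) choose k) * coeff f (n+k)"
proof -
  have eq: "\<And>i. (if i - k = n then of_nat (i choose k) * coeff f i else 0) =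
        (if i = n + k then of_nat (i choose k) * coeff f i else (0::'a))"
    by (auto simp: binomial_eq_0)
  have "coeff (hasse k f) n = (\<Sum>i\<le>degree f. (if i - k = n then of_nat (i choose k) * coeff f i else 0))"
    unfolding hasse_def coeff_sum coeff_monom by simp
  also have "\<dots> = (\<Sum>i\<le>degree f. (if i = n + k then of_nat (i choose k) * coeff f i else 0))"
    using eq by simp
  also have "\<dots> = of_nat ((n+k) choose k) * coeff f (n+k)"
    by (auto simp: coeff_eq_0)
  finally show ?thesis .
qed

lemma hasse_0: "hasse 0 f = f"
  by (rule poly_eqI) (simp add: coeff_hasse)

lemma hasse_gt: "degree f < k \<Longrightarrow> hasse k f = 0"
  by (rule poly_eqI) (simp add: coeff_hasse coeff_eq_0)

lemma hasse_deg: "f \<noteq> 0 \<Longrightarrow> hasse (degree f) f \<noteq> 0"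
proof
  assume "f \<noteq> 0" "hasse (degree f) f = 0"
  then have "coeff (hasse (degree f) f) 0 = 0" by simp
  then show False using \<open>f \<noteq> 0\<close> by (simp add: coeff_hasse)
qed

definition YY :: "'a::comm_ring_1 poly poly" where "YY = [:[:0,1:], 1:]"
definition TT :: "'a::comm_ring_1 poly \<Rightarrow> 'a poly poly" where
  "TT f = pcompose (map_poly (\<lambda>c. [:c:]) f) YY"

lemma coeff_YY_pow: "\<not> k \<le> i \<Longrightarrow> coeff (YY ^ i :: 'a::comm_ring_1 poly poly) k = 0"
proof -
  assume nk: "\<not> k \<le> i"
  have "degree (YY ^ i :: 'a poly poly) \<le> degree (YY :: 'a poly poly) * i"
    by (rule degree_power_le)
  also have "degree (YY :: 'a poly poly) = 1" unfolding YY_def by simp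
  finally have "degree (YY ^ i :: 'a poly poly) < k" using nk by simp
  then show ?thesis by (rule coeff_eq_0)
qed

lemma const_sum: "[:sum h A:] = (\<Sum>i\<in>A. [:h i:])"
  using monom_sum[of h A 0] by (simp add: monom_0)

lemma map_const_mult: "map_poly (\<lambda>c. [:c:]) (f * g) = map_poly (\<lambda>c. [:c:]) f * map_poly (\<lambda>c. [:c::'a::comm_ring_1:]) g"
proof (rule poly_eqI)
  fix n
  have "\<And>(A::nat set) (h::nat\<Rightarrow>'a). [:sum h A:] = (\<Sum>i\<in>A. [:h i:])"
    by (rule const_sum)
  moreover have "\<And>a b::'a. [:a * b:] = [:a:] * [:b:]" by simp
  ultimately
  show "coeff (map_poly (\<lambda>c. [:c:]) (f * g)) n = coeff (map_poly (\<lambda>c. [:c:]) f * map_poly (\<lambda>c. [:c:]) g) n"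
    by (simp add: coeff_map_poly coeff_mult mult.commute)
qed

lemma TT_mult: "TT (f * g) = TT f * TT g"
  unfolding TT_def map_const_mult pcompose_mult ..

lemma coeff_TT: "coeff (TT f) k = hasse k f"
proof -
  have "TT f = (\<Sum>i\<le>degree f. [:[:coeff f i:]:] * YY ^ i)"
    unfolding TT_def pcompose_altdef poly_altdef
    by (simp add: map_poly_map_poly degree_map_poly coeff_map_poly o_def)
  then have "coeff (TT f) k = (\<Sum>i\<le>degree f. [:coeff f i:] * coeff (YY ^ i) k)"
    by (simp add: coeff_sum)
  also have "\<dots> = (\<Sum>i\<le>degree f. monom (of_nat (i choose k) * coeff f i) (i - k))"
  proof (rule sum.cong[OF refl])
    fix i
    show "[:coeff f i:] * coeff (YY ^ i) k = monom (of_nat (i choose k) * coeff f i) (i - k)"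
    proof (cases "k \<le> i")
      case True
      then show ?thesis unfolding YY_def
        by (simp add: coeff_linear_poly_power monom_altdef of_nat_poly)
    next
      case False
      have "i choose k = 0" using False by (simp add: binomial_eq_0)
      moreover have "coeff (YY ^ i :: 'a poly poly) k = 0" by (rule coeff_YY_pow[OF False])
      ultimately show ?thesis by (simp add: binomial_eq_0)
    qed
  qed
  finally show ?thesis unfolding hasse_def .
qed

lemma hasse_mult: "hasse k (f * g) = (\<Sum>i\<le>k. hasse i f * hasse (k - i) g)"
  by (simp add: coeff_TT[symmetric] TT_mult coeff_mult)



lemma nsmul_0[simp]: "nsmul 0 a = 0" by (simp add: nsmul_def)
lemma nsmul_Suc: "nsmul (Suc n) a = a + nsmul n a" by (simp add: nsmul_def add.commute)
lemma nsmul_add: "nsmul n (a + b) = nsmul n a + nsmul n b"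
  by (simp add: nsmul_def sum.distrib)
lemma nsmul_diff: "nsmul n (a - b) = nsmul n a - nsmul n (b::'g::ab_group_add)"
  by (simp add: nsmul_def sum_subtractf)
lemma nsmul_plus: "nsmul (m + n) a = nsmul m a + nsmul n (a::'g::ab_group_add)"
  by (induction m) (simp_all add: nsmul_Suc add.assoc)
lemma nsmul_mult: "nsmul (m * n) a = nsmul m (nsmul n (a::'g::ab_group_add))"
  by (induction m) (simp_all add: nsmul_Suc nsmul_plus)
lemma nsmul_mono: "a \<le> b \<Longrightarrow> nsmul n a \<le> nsmul n (b::'g::linordered_ab_group_add)"
  by (simp add: nsmul_def sum_mono)
lemma nsmul_strict: "a < b \<Longrightarrow> 0 < n \<Longrightarrow> nsmul n a < nsmul n (b::'g::linordered_ab_group_add)"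
  unfolding nsmul_def by (rule sum_strict_mono) auto
lemma nsmul_le_iff: "0 < n \<Longrightarrow> nsmul n a \<le> nsmul n b \<longleftrightarrow> a \<le> (b::'g::linordered_ab_group_add)"
  by (meson linorder_not_le nsmul_mono nsmul_strict)
lemma nsmul_less_iff: "0 < n \<Longrightarrow> nsmul n a < nsmul n b \<longleftrightarrow> a < (b::'g::linordered_ab_group_add)"
  by (meson linorder_not_le nsmul_mono nsmul_strict)

lemma dh_le_trans:
  assumes "dh_le p q" "dh_le q r" "snd q > 0"
  shows "dh_le p (r::'g::linordered_ab_group_add \<times> nat)"
proof -
  obtain x a where p: "p = (x, a)" by (cases p)
  obtain y b where q: "q = (y, b)" by (cases q)
  obtain z c where r: "r = (z, c)" by (cases r)
  have 1: "nsmul b x \<le> nsmul a y" "nsmul c y \<le> nsmul b z" "b > 0"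
    using assms by (auto simp: dh_le_def p q r)
  have "nsmul (b * c) x \<le> nsmul (a * c) y"
    using nsmul_mono[OF 1(1), of c] by (simp add: nsmul_mult[symmetric] mult.commute)
  also have "\<dots> \<le> nsmul (b * a) z"
    using nsmul_mono[OF 1(2), of a] by (simp add: nsmul_mult[symmetric] mult.commute)
  finally have "nsmul b (nsmul c x) \<le> nsmul b (nsmul a z)" by (simp add: nsmul_mult)
  then show ?thesis using 1(3) by (simp add: nsmul_le_iff dh_le_def p r)
qed

lemma dh_le_total: "dh_le p q \<or> dh_le q (p::'g::linordered_ab_group_add \<times> nat)"
  by (auto simp: dh_le_def)

lemma dh_le_refl: "dh_le p (p::'g::linordered_ab_group_add \<times> nat)"
  by (auto simp: dh_le_def)

lemma finite_max_ex:
  assumes "finite S" "S \<noteq> {}" "\<forall>p\<in>S. snd p > 0"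
  shows "\<exists>p. p \<in> S \<and> (\<forall>q\<in>S. dh_le q (p::'g::linordered_ab_group_add \<times> nat))"
  using assms
proof (induction S rule: finite_ne_induct)
  case (singleton x) then show ?case by (auto simp: dh_le_refl)
next
  case (insert x F)
  then obtain p where p: "p \<in> F" "\<forall>q\<in>F. dh_le q p" by auto
  show ?case
  proof (cases "dh_le x p")
    case True then show ?thesis using p by (intro exI[of _ p]) auto
  next
    case False
    then have "dh_le p x" using dh_le_total by blast
    have sp: "snd p > 0" using p(1) insert.prems by auto
    have "\<forall>q\<in>insert x F. dh_le q x"
    proof
      fix q assume "q \<in> insert x F"
      then show "dh_le q x"
      proof
        assume "q = x" then show ?thesis by (simp add: dh_le_refl)
      next
        assume "q \<in> F" then show ?thesis using p(2) dh_le_trans[OF _ \<open>dh_le p x\<close> sp] by blast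
      qed
    qed
    then show ?thesis by blast
  qed
qed

lemma double_zero: "x + x = 0 \<Longrightarrow> x = (0::'g::linordered_ab_group_add)"
proof (rule ccontr)
  assume "x + x = 0" "x \<noteq> 0"
  then have "x < 0 \<or> x > 0" by auto
  then show False using \<open>x + x = 0\<close> add_neg_neg[of x x] add_pos_pos[of x x] by auto
qed

context
  fixes \<nu> :: "'a::field poly \<Rightarrow> 'g::linordered_ab_group_add"
  assumes val: "is_valuation \<nu>"
begin

lemma val_mult: "a \<noteq> 0 \<Longrightarrow> b \<noteq> 0 \<Longrightarrow> \<nu> (a * b) = \<nu> a + \<nu> b"
  using val by (auto simp: is_valuation_def)

lemma val_add: "a \<noteq> 0 \<Longrightarrow> b \<noteq> 0 \<Longrightarrow> a + b \<noteq> 0 \<Longrightarrow> min (\<nu> a) (\<nu> b) \<le> \<nu> (a + b)"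
  using val by (auto simp: is_valuation_def)

lemma val_one: "\<nu> 1 = 0"
  using val_mult[of 1 1] by simp

lemma val_neg: assumes "a \<noteq> 0" shows "\<nu> (- a) = \<nu> a"
proof -
  have "\<nu> (-1) + \<nu> (-1) = 0" using val_mult[of "-1" "-1"] val_one by simp
  then have "\<nu> (-1) = 0"
    using double_zero by blast
  then show ?thesis using val_mult[of "-1" a] assms by simp
qed

lemma val_sum_mono:
  assumes "finite S" "\<And>x y. x \<le> y \<Longrightarrow> P x \<Longrightarrow> P y"
    "\<And>i. i \<in> S \<Longrightarrow> s i \<noteq> 0 \<Longrightarrow> P (\<nu> (s i))"
  shows "sum s S = 0 \<or> P (\<nu> (sum s S))"
  using assms(1,3)
proof (induction S rule: finite_induct)
  case empty then show ?case by simp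
next
  case (insert x F)
  have IH: "sum s F = 0 \<or> P (\<nu> (sum s F))" using insert by auto
  have sx: "s x = 0 \<or> P (\<nu> (s x))" using insert by auto
  have eq: "sum s (insert x F) = s x + sum s F" using insert by simp
  show ?case
  proof (cases "s x = 0 \<or> sum s F = 0 \<or> s x + sum s F = 0")
    case True then show ?thesis using IH sx eq by auto
  next
    case False
    then have le: "min (\<nu> (s x)) (\<nu> (sum s F)) \<le> \<nu> (sum s (insert x F))"
      using val_add[of "s x" "sum s F"] eq by simp
    have m: "P (min (\<nu> (s x)) (\<nu> (sum s F)))" using IH sx False
      by (simp add: min_def)
    show ?thesis using assms(2)[OF le m] by (rule disjI2)
  qed
qed

lemma val_add_strict:
  assumes "a \<noteq> 0" "b = 0 \<or> \<nu> a < \<nu> b"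
  shows "a + b \<noteq> 0 \<and> \<nu> (a + b) = \<nu> a"
proof (cases "b = 0")
  case True then show ?thesis using assms by simp
next
  case False
  then have lt: "\<nu> a < \<nu> b" using assms by auto
  have ne: "a + b \<noteq> 0"
  proof
    assume "a + b = 0"
    then have "b = - a" using minus_unique by metis
    then show False using lt val_neg[OF assms(1)] by simp
  qed
  have "min (\<nu> a) (\<nu> b) \<le> \<nu> (a + b)" using val_add[OF assms(1) False ne] .
  then have ge: "\<nu> a \<le> \<nu> (a + b)" using lt by (simp add: min_def split: if_splits)
  have "min (\<nu> (a + b)) (\<nu> (- b)) \<le> \<nu> (a + b + - b)"
    using val_add[OF ne, of "- b"] False assms(1) by simp
  then have "min (\<nu> (a + b)) (\<nu> b) \<le> \<nu> a" using val_neg[OF False] by simp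
  then have "\<nu> (a + b) \<le> \<nu> a" using lt by (auto simp: min_def split: if_splits)
  then show ?thesis using ge ne by simp
qed

end


lemma dh_le_iff1: "dh_le (a - b, i) (e, m) \<longleftrightarrow> nsmul m a \<le> nsmul m b + nsmul i (e::'g::linordered_ab_group_add)"
  by (auto simp: dh_le_def nsmul_diff algebra_simps)

lemma dh_le_iff2: "dh_le (e, m) (a - b, i) \<longleftrightarrow> nsmul m b + nsmul i e \<le> nsmul m (a::'g::linordered_ab_group_add)"
  by (auto simp: dh_le_def nsmul_diff algebra_simps)

lemma hasse_ne_deg: "hasse i f \<noteq> 0 \<Longrightarrow> i \<le> degree f"
  using hasse_gt by (metis not_le)

lemma eps_set_props:
  assumes "degree f \<ge> 1"
  shows "finite (eps_set \<nu> f)" "eps_set \<nu> f \<noteq> {}" "\<forall>p\<in>eps_set \<nu> f. snd p > 0"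
proof -
  have "eps_set \<nu> f = (\<lambda>k. (\<nu> f - \<nu> (hasse k f), k)) ` {k. 1 \<le> k \<and> k \<le> degree f \<and> hasse k f \<noteq> 0}"
    unfolding eps_set_def by auto
  then show "finite (eps_set \<nu> f)" by simp
  have "f \<noteq> 0" using assms by auto
  then have "(\<nu> f - \<nu> (hasse (degree f) f), degree f) \<in> eps_set \<nu> f"
    using assms hasse_deg unfolding eps_set_def by blast
  then show "eps_set \<nu> f \<noteq> {}" by blast
  show "\<forall>p\<in>eps_set \<nu> f. snd p > 0" unfolding eps_set_def by auto
qed

lemma epsilon_spec:
  assumes "degree f \<ge> 1"
  shows "epsilon \<nu> f \<in> eps_set \<nu> f \<and> (\<forall>q\<in>eps_set \<nu> f. dh_le q (epsilon \<nu> f))"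
  unfolding epsilon_def
  by (rule someI_ex) (rule finite_max_ex[OF eps_set_props[OF assms]])

context
  fixes \<nu> :: "'a::field poly \<Rightarrow> 'g::linordered_ab_group_add"
  assumes val: "is_valuation \<nu>"
begin

lemma key_bound:
  assumes Hf: "\<And>i. hasse i f \<noteq> 0 \<Longrightarrow> nsmul m (\<nu> f) \<le> nsmul m (\<nu> (hasse i f)) + nsmul i e"
    and Hg: "\<And>j. hasse j g \<noteq> 0 \<Longrightarrow> nsmul m (\<nu> g) \<le> nsmul m (\<nu> (hasse j g)) + nsmul j e"
    and nz: "f \<noteq> 0" "g \<noteq> 0" and hk: "hasse k (f * g) \<noteq> 0"
  shows "nsmul m (\<nu> (f * g)) \<le> nsmul m (\<nu> (hasse k (f * g))) + nsmul k e"
proof -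
  define C where "C = nsmul m (\<nu> f) + nsmul m (\<nu> g) - nsmul k e"
  have "(\<Sum>i\<le>k. hasse i f * hasse (k - i) g) = 0 \<or> C \<le> nsmul m (\<nu> (\<Sum>i\<le>k. hasse i f * hasse (k - i) g))"
  proof (rule val_sum_mono[OF val])
    show "\<And>x y. x \<le> y \<Longrightarrow> C \<le> nsmul m x \<Longrightarrow> C \<le> nsmul m y"
      using nsmul_mono order.trans by blast
  next
    fix i assume i: "i \<in> {..k}" "hasse i f * hasse (k - i) g \<noteq> 0"
    then have a: "hasse i f \<noteq> 0" and b: "hasse (k - i) g \<noteq> 0" by auto
    have ek: "nsmul k e = nsmul i e + nsmul (k - i) e" using i(1) nsmul_plus[of i "k - i" e] by simp
    have "\<nu> (hasse i f * hasse (k - i) g) = \<nu> (hasse i f) + \<nu> (hasse (k - i) g)"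
      using val_mult[OF val a b] .
    then show "C \<le> nsmul m (\<nu> (hasse i f * hasse (k - i) g))"
      using add_mono[OF Hf[OF a] Hg[OF b]] unfolding C_def ek by (simp add: nsmul_add algebra_simps)
  qed simp
  then have "C \<le> nsmul m (\<nu> (hasse k (f * g)))" using hk by (simp add: hasse_mult)
  moreover have "\<nu> (f * g) = \<nu> f + \<nu> g" using val_mult[OF val nz] .
  ultimately show ?thesis unfolding C_def by (simp add: nsmul_add algebra_simps)
qed

lemma key_exact:
  assumes Hf: "\<And>i. hasse i f \<noteq> 0 \<Longrightarrow> nsmul m (\<nu> f) \<le> nsmul m (\<nu> (hasse i f)) + nsmul i e"
    and Hg: "\<And>j. hasse j g \<noteq> 0 \<Longrightarrow> nsmul m (\<nu> g) \<le> nsmul m (\<nu> (hasse j g)) + nsmul j e"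
    and nz: "f \<noteq> 0" "g \<noteq> 0" and m: "m > 0"
    and ex: "i1 \<ge> 1" "hasse i1 f \<noteq> 0" "nsmul m (\<nu> f) = nsmul m (\<nu> (hasse i1 f)) + nsmul i1 e"
  shows "\<exists>k\<ge>1. hasse k (f * g) \<noteq> 0 \<and> nsmul m (\<nu> (f * g)) = nsmul m (\<nu> (hasse k (f * g))) + nsmul k e"
proof -
  define If where "If = {i. hasse i f \<noteq> 0 \<and> nsmul m (\<nu> f) = nsmul m (\<nu> (hasse i f)) + nsmul i e}"
  define Jg where "Jg = {j. hasse j g \<noteq> 0 \<and> nsmul m (\<nu> g) = nsmul m (\<nu> (hasse j g)) + nsmul j e}"
  have finI: "finite If" by (rule finite_subset[of _ "{..degree f}"]) (auto simp: If_def hasse_ne_deg)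
  have finJ: "finite Jg" by (rule finite_subset[of _ "{..degree g}"]) (auto simp: Jg_def hasse_ne_deg)
  have i1I: "i1 \<in> If" using ex by (simp add: If_def)
  have 0: "0 \<in> Jg" using nz by (simp add: Jg_def hasse_0)
  define i0 where "i0 = Max If"
  define j0 where "j0 = Max Jg"
  have i0I: "i0 \<in> If" unfolding i0_def using finI i1I by (intro Max_in) auto
  have j0J: "j0 \<in> Jg" unfolding j0_def using finJ 0 by (intro Max_in) auto
  have "i1 \<le> i0" unfolding i0_def using finI i1I by simp
  then have i0pos: "i0 \<ge> 1" using ex by simp
  define k where "k = i0 + j0"
  define t where "t i = hasse i f * hasse (k - i) g" for i
  have a0: "hasse i0 f \<noteq> 0" and b0: "hasse j0 g \<noteq> 0" using i0I j0J by (auto simp: If_def Jg_def)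
  have kj: "k - i0 = j0" by (simp add: k_def)
  have t0: "t i0 \<noteq> 0" using a0 b0 by (simp add: t_def kj)
  have vt0: "\<nu> (t i0) = \<nu> (hasse i0 f) + \<nu> (hasse j0 g)" using val_mult[OF val a0 b0] by (simp add: t_def kj)
  have ek0: "nsmul k e = nsmul i0 e + nsmul j0 e" by (simp add: k_def nsmul_plus)
  have N0: "nsmul m (\<nu> (t i0)) + nsmul k e = nsmul m (\<nu> f) + nsmul m (\<nu> g)"
    using i0I j0J unfolding vt0 ek0 If_def Jg_def by (simp add: nsmul_add algebra_simps)
  have strict: "\<nu> (t i0) < \<nu> (t i)" if i: "i \<in> {..k} - {i0}" "t i \<noteq> 0" for i
  proof -
    have a: "hasse i f \<noteq> 0" and b: "hasse (k - i) g \<noteq> 0" using i(2) by (auto simp: t_def)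
    have vt: "\<nu> (t i) = \<nu> (hasse i f) + \<nu> (hasse (k - i) g)" using val_mult[OF val a b] by (simp add: t_def)
    have ek: "nsmul k e = nsmul i e + nsmul (k - i) e" using i(1) nsmul_plus[of i "k - i" e] by simp
    have lt: "nsmul m (\<nu> f) + nsmul m (\<nu> g) <
        (nsmul m (\<nu> (hasse i f)) + nsmul i e) + (nsmul m (\<nu> (hasse (k - i) g)) + nsmul (k - i) e)"
    proof (cases "i0 < i")
      case True
      then have "i \<notin> If" using finI unfolding i0_def by (meson Max_ge leD)
      then have "nsmul m (\<nu> f) < nsmul m (\<nu> (hasse i f)) + nsmul i e"
        using Hf[OF a] a by (auto simp: If_def)
      then show ?thesis using Hg[OF b] by (rule add_less_le_mono)
    next
      case False
      then have "i < i0" using i(1) by auto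
      then have "j0 < k - i" using i(1) by (simp add: k_def)
      then have "k - i \<notin> Jg" using finJ unfolding j0_def by (meson Max_ge leD)
      then have "nsmul m (\<nu> g) < nsmul m (\<nu> (hasse (k - i) g)) + nsmul (k - i) e"
        using Hg[OF b] b by (auto simp: Jg_def)
      then show ?thesis using Hf[OF a] by (intro add_le_less_mono)
    qed
    have "nsmul m (\<nu> (t i0)) + nsmul k e = nsmul m (\<nu> f) + nsmul m (\<nu> g)" by (rule N0)
    also note lt
    also have "(nsmul m (\<nu> (hasse i f)) + nsmul i e) + (nsmul m (\<nu> (hasse (k - i) g)) + nsmul (k - i) e)
       = nsmul m (\<nu> (t i)) + nsmul k e" by (simp add: vt ek nsmul_add algebra_simps)
    finally have "nsmul m (\<nu> (t i0)) < nsmul m (\<nu> (t i))" by simp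
    then show ?thesis using m by (simp add: nsmul_less_iff)
  qed
  have rest: "sum t ({..k} - {i0}) = 0 \<or> \<nu> (t i0) < \<nu> (sum t ({..k} - {i0}))"
    by (rule val_sum_mono[OF val]) (auto intro: strict order.strict_trans2)
  have split: "hasse k (f * g) = t i0 + sum t ({..k} - {i0})"
    unfolding hasse_mult t_def[symmetric] by (subst sum.remove[of _ i0]) (auto simp: k_def)
  have res: "t i0 + sum t ({..k} - {i0}) \<noteq> 0 \<and> \<nu> (t i0 + sum t ({..k} - {i0})) = \<nu> (t i0)"
    by (rule val_add_strict[OF val t0 rest])
  have "nsmul m (\<nu> (f * g)) = nsmul m (\<nu> (hasse k (f * g))) + nsmul k e"
    using res N0 val_mult[OF val nz] unfolding split by (simp add: nsmul_add)
  moreover have "k \<ge> 1" using i0pos by (simp add: k_def)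
  ultimately show ?thesis using res split by auto
qed

end

lemma hyp_from_eps:
  assumes df: "degree f \<ge> 1" and le: "dh_le (epsilon \<nu> f) (e, m)"
    and hi: "hasse i f \<noteq> 0"
  shows "nsmul m (\<nu> f) \<le> nsmul m (\<nu> (hasse i f)) + nsmul i (e::'g::linordered_ab_group_add)"
proof (cases "i = 0")
  case True then show ?thesis by (simp add: hasse_0)
next
  case False
  have "(\<nu> f - \<nu> (hasse i f), i) \<in> eps_set \<nu> f"
    using False hi hasse_ne_deg[OF hi] unfolding eps_set_def by auto
  then have "dh_le (\<nu> f - \<nu> (hasse i f), i) (epsilon \<nu> f)" using epsilon_spec[OF df] by blast
  moreover have "snd (epsilon \<nu> f) > 0" using epsilon_spec[OF df] eps_set_props(3)[OF df] by blast
  ultimately have "dh_le (\<nu> f - \<nu> (hasse i f), i) (e, m)" using le dh_le_trans by blast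
  then show ?thesis by (simp add: dh_le_iff1)
qed

lemma exact_from_eps:
  assumes df: "degree f \<ge> 1" and E: "epsilon \<nu> f = (e, m)"
  shows "m \<ge> 1 \<and> hasse m f \<noteq> 0 \<and> nsmul m (\<nu> f) = nsmul m (\<nu> (hasse m f)) + nsmul m (e::'g::linordered_ab_group_add)"
proof -
  have "(e, m) \<in> eps_set \<nu> f" using epsilon_spec[OF df, where \<nu>=\<nu>] E by simp
  then show ?thesis unfolding eps_set_def by (auto simp: nsmul_diff)
qed

theorem mainTheorem5:
  fixes \<nu> :: "'a::field poly \<Rightarrow> 'g::linordered_ab_group_add"
    and f g :: "'a poly"
  assumes "is_valuation \<nu>"
    and "degree f \<ge> 1" and "degree g \<ge> 1"
  shows "dh_eq (epsilon \<nu> (f * g)) (dh_max (epsilon \<nu> f) (epsilon \<nu> g))"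
proof -
  note val = assms(1) and df = assms(2) and dg = assms(3)
  have nzf: "f \<noteq> 0" and nzg: "g \<noteq> 0" using df dg by auto
  have dfg: "degree (f * g) \<ge> 1" using df dg nzf nzg by (simp add: degree_mult_eq)
  obtain e m where E: "dh_max (epsilon \<nu> f) (epsilon \<nu> g) = (e, m)" by (cases "dh_max (epsilon \<nu> f) (epsilon \<nu> g)")
  have lef: "dh_le (epsilon \<nu> f) (e, m)" and leg: "dh_le (epsilon \<nu> g) (e, m)"
    using E dh_le_total[of "epsilon \<nu> f" "epsilon \<nu> g"]
    by (auto simp: dh_max_def dh_le_refl split: if_splits)
  have Hf: "\<And>i. hasse i f \<noteq> 0 \<Longrightarrow> nsmul m (\<nu> f) \<le> nsmul m (\<nu> (hasse i f)) + nsmul i e"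
    by (rule hyp_from_eps[OF df lef])
  have Hg: "\<And>i. hasse i g \<noteq> 0 \<Longrightarrow> nsmul m (\<nu> g) \<le> nsmul m (\<nu> (hasse i g)) + nsmul i e"
    by (rule hyp_from_eps[OF dg leg])
  have "epsilon \<nu> f = (e, m) \<or> epsilon \<nu> g = (e, m)" using E by (auto simp: dh_max_def split: if_splits)
  then have "\<exists>k\<ge>1. hasse k (f * g) \<noteq> 0 \<and> nsmul m (\<nu> (f * g)) = nsmul m (\<nu> (hasse k (f * g))) + nsmul k e"
  proof
    assume "epsilon \<nu> f = (e, m)"
    from exact_from_eps[OF df this] have ex: "m \<ge> 1" "hasse m f \<noteq> 0"
      "nsmul m (\<nu> f) = nsmul m (\<nu> (hasse m f)) + nsmul m e" by auto
    have m0: "m > 0" using ex(1) by linarith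
    show ?thesis by (rule key_exact[OF val Hf Hg nzf nzg m0 ex])
  next
    assume "epsilon \<nu> g = (e, m)"
    from exact_from_eps[OF dg this] have ex: "m \<ge> 1" "hasse m g \<noteq> 0"
      "nsmul m (\<nu> g) = nsmul m (\<nu> (hasse m g)) + nsmul m e" by auto
    have m0: "m > 0" using ex(1) by linarith
    have "\<exists>k\<ge>1. hasse k (g * f) \<noteq> 0 \<and> nsmul m (\<nu> (g * f)) = nsmul m (\<nu> (hasse k (g * f))) + nsmul k e"
      using key_exact[OF val Hg Hf nzg nzf m0 ex] .
    then show ?thesis by (simp add: mult.commute)
  qed
  then obtain k where k: "k \<ge> 1" "hasse k (f * g) \<noteq> 0"
    "nsmul m (\<nu> (f * g)) = nsmul m (\<nu> (hasse k (f * g))) + nsmul k e" by blast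
  define q0 where "q0 = (\<nu> (f * g) - \<nu> (hasse k (f * g)), k)"
  have q0S: "q0 \<in> eps_set \<nu> (f * g)"
    using k hasse_ne_deg[OF k(2)] unfolding q0_def eps_set_def by auto
  have Eq0: "dh_le (e, m) q0" unfolding q0_def dh_le_iff2 using k(3) by simp
  obtain P where P: "epsilon \<nu> (f * g) = P" by simp
  have PS: "P \<in> eps_set \<nu> (f * g)" and Pmax: "\<forall>q\<in>eps_set \<nu> (f * g). dh_le q P"
    using epsilon_spec[OF dfg] P by auto
  have "dh_le q0 P" using Pmax q0S by blast
  then have EP: "dh_le (e, m) P" using Eq0 dh_le_trans[of "(e,m)" q0 P] k(1) by (simp add: q0_def)
  from PS obtain j where j: "P = (\<nu> (f * g) - \<nu> (hasse j (f * g)), j)" "hasse j (f * g) \<noteq> 0"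
    unfolding eps_set_def by auto
  have "nsmul m (\<nu> (f * g)) \<le> nsmul m (\<nu> (hasse j (f * g))) + nsmul j e"
    by (rule key_bound[OF val Hf Hg nzf nzg j(2)])
  then have PE: "dh_le P (e, m)" unfolding j(1) dh_le_iff1 .
  show ?thesis using PE EP by (simp add: dh_eq_def E P)
qed

end
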